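(* Let $X$ be a connected, locally compact Polish space with a partial order $\le$ whose strict part is $<$, and suppose there is $M\subseteq X$ such that: (i) $M$ has at least two elements, is connected, and is totally ordered by $<$; (ii) for every $m\in M$ and every neighborhood $U$ of $m$ in $X$ there are $\underline m,\overline m\in M$ with $m\in[\underline m,\overline m]\subseteq U$, where moreover $\overline m$ can be chosen with $m<\overline m$ if $m$ is not the largest element of $M$, and $\underline m$ can be chosen with $\underline m<m$ if $m$ is not the smallest element of $M$; (iii) for every bounded sequence $(x_n)$ in $X$ there are $\underline m,\overline m\in M$ with $\underline m\le x_n\le\overline m$ for all sufficiently large $n$. Let $\mathcal{U}$ be the set of continuous strictly increasing functions $X\to\mathbb{R}$ with the topology of uniform convergence on compact sets, and $\mathcal{R}^{\mathrm{mon}}$ the set of continuous strictly monotone preferences on $X$ with the topology of closed convergence. Define $\Phi:\mathcal{U}\to\mathcal{R}^{\mathrm{mon}}$ by $x\mathrel{\Phi(u)}y$ iff $u(x)\ge u(y)$. Then $\Phi$ is an open map.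
   Context: $[\underline m,\overline m]=\{z\in X:\underline m\le z\le\overline m\}$. A function $u$ is strictly increasing if $x<y$ implies $u(x)<u(y)$. A preference is a complete transitive binary relation; continuous if closed in $X\times X$; strictly monotone if $y<x$ implies $x\succ y$. Closed convergence on closed subsets of $X\times X$: $F^n\to F$ iff $F$ equals both the set of points every neighborhood of which meets $F^n$ for all large $n$, and the set of points every neighborhood of which meets $F^n$ for infinitely many $n$. Boundedness in (iii) refers to a metric compatible with the topology of $X$. *)

theory Defs
  imports "HOL-Analysis.Analysis"
begin

definition Polish_space :: "'a topology \<Rightarrow> bool" where
  "Polish_space T \<longleftrightarrow> completely_metrizable_space T \<and> separable_space T"

definition utilities :: "('a::{topological_space,order} \<Rightarrow> real) set" where
  "utilities = {u. continuous_on UNIV u \<and> (\<forall>x y. x < y \<longrightarrow> u x < u y)}"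

text \<open>Preferences as subsets of X x X: (x,y) in R means x is weakly preferred to y.\<close>
definition preference :: "('a \<times> 'a) set \<Rightarrow> bool" where
  "preference R \<longleftrightarrow> (\<forall>x y. (x, y) \<in> R \<or> (y, x) \<in> R) \<and> trans R"

definition mono_prefs :: "(('a::{topological_space,order}) \<times> 'a) set set" where
  "mono_prefs = {R. preference R \<and> closed R \<and>
      (\<forall>x y. y < x \<longrightarrow> (x, y) \<in> R \<and> (y, x) \<notin> R)}"

definition Phi :: "('a \<Rightarrow> real) \<Rightarrow> ('a \<times> 'a) set" where
  "Phi u = {(x, y). u x \<ge> u y}"

definition open_ucc :: "('a::{topological_space,order} \<Rightarrow> real) set \<Rightarrow> bool" where
  "open_ucc S \<longleftrightarrow> S \<subseteq> utilities \<and>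
     (\<forall>u\<in>S. \<exists>K e. compact K \<and> e > 0 \<and>
        (\<forall>v\<in>utilities. (\<forall>x\<in>K. \<bar>v x - u x\<bar> < e) \<longrightarrow> v \<in> S))"

definition closed_conv :: "(nat \<Rightarrow> 'b::topological_space set) \<Rightarrow> 'b set \<Rightarrow> bool" where
  "closed_conv F G \<longleftrightarrow>
     G = {p. \<forall>V. open V \<and> p \<in> V \<longrightarrow> (\<forall>\<^sub>F n in sequentially. F n \<inter> V \<noteq> {})} \<and>
     G = {p. \<forall>V. open V \<and> p \<in> V \<longrightarrow> (\<exists>\<^sub>F n in sequentially. F n \<inter> V \<noteq> {})}"

text \<open>Topology of closed convergence on the monotone preferences: the topology
  determined by closed convergence of sequences (sequentially open sets).\<close>
definition open_cc :: "(('a::{topological_space,order}) \<times> 'a) set set \<Rightarrow> bool" where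
  "open_cc S \<longleftrightarrow> S \<subseteq> mono_prefs \<and>
     (\<forall>R\<in>S. \<forall>F. (\<forall>n. F n \<in> mono_prefs) \<and> closed_conv F R \<longrightarrow>
        (\<forall>\<^sub>F n in sequentially. F n \<in> S))"

end

theory Submission
  imports Defs
begin

lemma mp_refl: "R \<in> mono_prefs \<Longrightarrow> (x,x) \<in> R"
  unfolding mono_prefs_def preference_def by blast

lemma mp_le: "R \<in> mono_prefs \<Longrightarrow> y \<le> x \<Longrightarrow> (x,y) \<in> R"
proof -
  assume R: "R \<in> mono_prefs" and "y \<le> x"
  then consider "y = x" | "y < x" by (auto simp: order.order_iff_strict)
  then show ?thesis
  proof cases
    case 1 then show ?thesis using R unfolding mono_prefs_def preference_def by blast
  next
    case 2 then show ?thesis using R unfolding mono_prefs_def by blast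
  qed
qed

lemma mp_strict: "R \<in> mono_prefs \<Longrightarrow> y < x \<Longrightarrow> (y,x) \<notin> R"
  unfolding mono_prefs_def by blast

lemma mp_trans: "R \<in> mono_prefs \<Longrightarrow> (x,y) \<in> R \<Longrightarrow> (y,z) \<in> R \<Longrightarrow> (x,z) \<in> R"
  unfolding mono_prefs_def preference_def by (blast dest: transD)

lemma mp_total: "R \<in> mono_prefs \<Longrightarrow> (x,y) \<notin> R \<Longrightarrow> (y,x) \<in> R"
  unfolding mono_prefs_def preference_def by blast

lemma mp_closed: "R \<in> mono_prefs \<Longrightarrow> closed R"
  unfolding mono_prefs_def by blast

lemma chain_R:
  assumes ch: "\<forall>a\<in>M. \<forall>b\<in>M. a \<noteq> b \<longrightarrow> a < b \<or> b < a"
    and R: "R \<in> mono_prefs" and a: "a \<in> M" and b: "b \<in> M"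
  shows "(a,b) \<in> R \<longleftrightarrow> b \<le> a"
proof
  assume "(a,b) \<in> R"
  show "b \<le> a"
  proof (rule ccontr)
    assume "\<not> b \<le> a"
    then have "a \<noteq> b" by auto
    then have "a < b" using ch a b \<open>\<not> b \<le> a\<close> by (meson less_imp_le)
    then show False using mp_strict[OF R] \<open>(a,b) \<in> R\<close> by blast
  qed
qed (use mp_le[OF R] in blast)

lemma util_chain:
  assumes ch: "\<forall>a\<in>M. \<forall>b\<in>M. a \<noteq> b \<longrightarrow> a < b \<or> b < a"
    and u: "u \<in> utilities" and a: "a \<in> M" and b: "b \<in> M"
  shows "u a \<le> u b \<longleftrightarrow> a \<le> b"
proof -
  have sm: "\<And>x y. x < y \<Longrightarrow> u x < u y" using u unfolding utilities_def by blast
  show ?thesis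
  proof
    assume "u a \<le> u b"
    show "a \<le> b"
    proof (rule ccontr)
      assume "\<not> a \<le> b"
      then have "a \<noteq> b" by auto
      then have "b < a" using ch a b \<open>\<not> a \<le> b\<close> by (meson less_imp_le)
      then show False using sm \<open>u a \<le> u b\<close> by force
    qed
  next
    assume "a \<le> b"
    then consider "a = b" | "a < b" by (auto simp: order.order_iff_strict)
    then show "u a \<le> u b" using sm by (cases, simp, fastforce)
  qed
qed

lemma Phi_mono: "u \<in> utilities \<Longrightarrow> Phi u \<in> mono_prefs"
proof -
  assume u: "u \<in> utilities"
  have c: "continuous_on UNIV u" and sm: "\<And>x y. x < y \<Longrightarrow> u x < u y"
    using u unfolding utilities_def by blast+
  have "closed {p :: 'a \<times> 'a. u (snd p) \<le> u (fst p)}"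
    by (intro closed_Collect_le continuous_on_compose2[OF c] continuous_intros) auto
  moreover have "Phi u = {p. u (snd p) \<le> u (fst p)}" unfolding Phi_def by auto
  ultimately have cl: "closed (Phi u)" by simp
  have tot: "\<forall>x y. (x, y) \<in> Phi u \<or> (y, x) \<in> Phi u" unfolding Phi_def by auto
  have tr: "trans (Phi u)" unfolding Phi_def trans_def by auto
  have mo: "\<forall>x y. y < x \<longrightarrow> (x, y) \<in> Phi u \<and> (y, x) \<notin> Phi u"
    unfolding Phi_def using sm by (auto simp: less_imp_le not_le)
  show ?thesis unfolding mono_prefs_def preference_def using cl tot tr mo by blast
qed

lemma exists_ind:
  fixes M :: "'a::{metric_space,order} set"
  assumes conn: "connected M"
    and bnd: "\<forall>x :: nat \<Rightarrow> 'a. bounded (range x) \<longrightarrow>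
           (\<exists>ml\<in>M. \<exists>mu\<in>M. \<forall>\<^sub>F n in sequentially. ml \<le> x n \<and> x n \<le> mu)"
    and R: "R \<in> mono_prefs"
  shows "\<exists>m\<in>M. (x,m) \<in> R \<and> (m,x) \<in> R"
proof -
  have "bounded (range (\<lambda>n::nat. x))" by simp
  then obtain ml mu where ml: "ml \<in> M" and mu: "mu \<in> M"
    and ev: "\<forall>\<^sub>F n in sequentially. ml \<le> x \<and> x \<le> mu"
    using bnd by blast
  have le: "ml \<le> x \<and> x \<le> mu" using ev by simp
  define A where "A = M \<inter> (\<lambda>m. (m,x)) -` R"
  define B where "B = M \<inter> (\<lambda>m. (x,m)) -` R"
  have cA: "closedin (top_of_set M) A" unfolding A_def
    by (rule closedin_closed_Int, rule continuous_closed_vimage[OF mp_closed[OF R]]) simp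
  have cB: "closedin (top_of_set M) B" unfolding B_def
    by (rule closedin_closed_Int, rule continuous_closed_vimage[OF mp_closed[OF R]]) simp
  have cov: "M \<subseteq> A \<union> B" unfolding A_def B_def using mp_total[OF R] by blast
  have "mu \<in> A" unfolding A_def using mu le mp_le[OF R] by blast
  moreover have "ml \<in> B" unfolding B_def using ml le mp_le[OF R] by blast
  ultimately have "A \<inter> B \<noteq> {}" using conn cA cB cov unfolding connected_closedin by blast
  then show ?thesis unfolding A_def B_def by blast
qed

definition mpt :: "'a set \<Rightarrow> ('a \<times> 'a) set \<Rightarrow> 'a \<Rightarrow> 'a" where
  "mpt M R x = (SOME m. m \<in> M \<and> (x,m) \<in> R \<and> (m,x) \<in> R)"

lemma mpt:
  fixes M :: "'a::{metric_space,order} set"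
  assumes conn: "connected M"
    and bnd: "\<forall>x :: nat \<Rightarrow> 'a. bounded (range x) \<longrightarrow>
           (\<exists>ml\<in>M. \<exists>mu\<in>M. \<forall>\<^sub>F n in sequentially. ml \<le> x n \<and> x n \<le> mu)"
    and R: "R \<in> mono_prefs"
  shows "mpt M R x \<in> M \<and> (x, mpt M R x) \<in> R \<and> (mpt M R x, x) \<in> R"
  unfolding mpt_def by (rule someI_ex) (use exists_ind[OF conn bnd R, of x] in blast)

lemma rep:
  fixes M :: "'a::{metric_space,order} set"
  assumes ch: "\<forall>a\<in>M. \<forall>b\<in>M. a \<noteq> b \<longrightarrow> a < b \<or> b < a"
    and conn: "connected M"
    and loc: "\<forall>m\<in>M. \<forall>U. open U \<and> m \<in> U \<longrightarrow>
           (\<exists>ml\<in>M. \<exists>mu\<in>M. m \<in> {ml..mu} \<and> {ml..mu} \<subseteq> U \<and>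
              (\<not> (\<forall>z\<in>M. z \<le> m) \<longrightarrow> m < mu) \<and>
              (\<not> (\<forall>z\<in>M. m \<le> z) \<longrightarrow> ml < m))"
    and bnd: "\<forall>x :: nat \<Rightarrow> 'a. bounded (range x) \<longrightarrow>
           (\<exists>ml\<in>M. \<exists>mu\<in>M. \<forall>\<^sub>F n in sequentially. ml \<le> x n \<and> x n \<le> mu)"
    and u: "u \<in> utilities" and R: "R \<in> mono_prefs"
  shows "Phi (u \<circ> mpt M R) = R \<and> u \<circ> mpt M R \<in> utilities"
proof -
  define m where "m = mpt M R"
  have mp: "\<And>x. m x \<in> M \<and> (x, m x) \<in> R \<and> (m x, x) \<in> R"
    unfolding m_def by (rule mpt[OF conn bnd R])
  have c: "continuous_on UNIV u" using u unfolding utilities_def by blast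
  have key: "(x,y) \<in> R \<longleftrightarrow> u (m y) \<le> u (m x)" for x y
  proof -
    have "(x,y) \<in> R \<longleftrightarrow> (m x, m y) \<in> R"
      using mp[of x] mp[of y] mp_trans[OF R] by meson
    also have "\<dots> \<longleftrightarrow> m y \<le> m x" using chain_R[OF ch R] mp by blast
    also have "\<dots> \<longleftrightarrow> u (m y) \<le> u (m x)" using util_chain[OF ch u] mp by blast
    finally show ?thesis .
  qed
  have P: "Phi (u \<circ> m) = R" unfolding Phi_def using key by auto
  have sm: "\<forall>x y. x < y \<longrightarrow> (u \<circ> m) x < (u \<circ> m) y"
  proof (intro allI impI)
    fix x y :: 'a assume "x < y"
    then have "(x,y) \<notin> R" using mp_strict[OF R] by blast
    then show "(u \<circ> m) x < (u \<circ> m) y" using key by force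
  qed
  have cont: "isCont (u \<circ> m) x0" for x0
    unfolding continuous_at_eps_delta
  proof (intro allI impI)
    fix \<epsilon> :: real assume ep: "\<epsilon> > 0"
    define m0 where "m0 = m x0"
    have m0M: "m0 \<in> M" unfolding m0_def using mp by blast
    define U where "U = u -` ball (u m0) \<epsilon>"
    have oU: "open U" unfolding U_def by (rule open_vimage[OF _ c]) simp
    have "m0 \<in> U" unfolding U_def using ep by simp
    then have "\<exists>ml\<in>M. \<exists>mu\<in>M. m0 \<in> {ml..mu} \<and> {ml..mu} \<subseteq> U \<and>
              (\<not> (\<forall>z\<in>M. z \<le> m0) \<longrightarrow> m0 < mu) \<and>
              (\<not> (\<forall>z\<in>M. m0 \<le> z) \<longrightarrow> ml < m0)"
      using loc m0M oU by blast
    then obtain ml mu where ml: "ml \<in> M" and mu: "mu \<in> M" and m0i: "m0 \<in> {ml..mu}"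
      and sub: "{ml..mu} \<subseteq> U"
      and hi: "\<not> (\<forall>z\<in>M. z \<le> m0) \<longrightarrow> m0 < mu"
      and lo: "\<not> (\<forall>z\<in>M. m0 \<le> z) \<longrightarrow> ml < m0"
      by blast
    define A where "A = (\<forall>z\<in>M. m0 \<le> z)"
    define B where "B = (\<forall>z\<in>M. z \<le> m0)"
    define Ob where "Ob = (if A then UNIV else {x. (ml,x) \<notin> R}) \<inter> (if B then UNIV else {x. (x,mu) \<notin> R})"
    have o1: "open {x. (ml,x) \<notin> R}"
    proof -
      have "{x. (ml,x) \<notin> R} = - ((\<lambda>x. (ml,x)) -` R)" by auto
      moreover have "closed ((\<lambda>x. (ml,x)) -` R)"
        by (rule continuous_closed_vimage[OF mp_closed[OF R]]) simp
      ultimately show ?thesis by (simp add: open_Compl)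
    qed
    have o2: "open {x. (x,mu) \<notin> R}"
    proof -
      have "{x. (x,mu) \<notin> R} = - ((\<lambda>x. (x,mu)) -` R)" by auto
      moreover have "closed ((\<lambda>x. (x,mu)) -` R)"
        by (rule continuous_closed_vimage[OF mp_closed[OF R]]) simp
      ultimately show ?thesis by (simp add: open_Compl)
    qed
    have oO: "open Ob" unfolding Ob_def using o1 o2 by (intro open_Int) auto
    have x0O: "x0 \<in> Ob"
    proof -
      have "(ml, x0) \<notin> R" if "\<not> A"
      proof
        assume "(ml, x0) \<in> R"
        then have "(ml, m0) \<in> R" using mp[of x0] mp_trans[OF R] unfolding m0_def by blast
        moreover have "ml < m0" using lo that unfolding A_def by blast
        ultimately show False using mp_strict[OF R] by blast
      qed
      moreover have "(x0, mu) \<notin> R" if "\<not> B"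
      proof
        assume "(x0, mu) \<in> R"
        then have "(m0, mu) \<in> R" using mp[of x0] mp_trans[OF R] unfolding m0_def by blast
        moreover have "m0 < mu" using hi that unfolding B_def by blast
        ultimately show False using mp_strict[OF R] by blast
      qed
      ultimately show ?thesis unfolding Ob_def by auto
    qed
    have inU: "m x \<in> U" if xO: "x \<in> Ob" for x
    proof -
      have mx: "m x \<in> M" using mp by blast
      have "ml \<le> m x"
      proof (cases A)
        case True
        then have "m0 \<le> m x" using mx unfolding A_def by blast
        then show ?thesis using m0i by (auto intro: order_trans)
      next
        case False
        then have "(ml, x) \<notin> R" using xO unfolding Ob_def by auto
        then have "(ml, m x) \<notin> R" using mp[of x] mp_trans[OF R] by blast
        then have n: "\<not> m x \<le> ml" using chain_R[OF ch R ml mx] by blast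
        then have "ml \<noteq> m x" by auto
        then have "ml < m x" using ch ml mx n by (meson less_imp_le)
        then show ?thesis by (rule less_imp_le)
      qed
      moreover have "m x \<le> mu"
      proof (cases B)
        case True
        then have "m x \<le> m0" using mx unfolding B_def by blast
        then show ?thesis using m0i by (auto intro: order_trans)
      next
        case False
        then have "(x, mu) \<notin> R" using xO unfolding Ob_def by auto
        then have "(m x, mu) \<notin> R" using mp[of x] mp_trans[OF R] by blast
        then have n: "\<not> mu \<le> m x" using chain_R[OF ch R mx mu] by blast
        then have "mu \<noteq> m x" by auto
        then have "m x < mu" using ch mu mx n by (meson less_imp_le)
        then show ?thesis by (rule less_imp_le)
      qed
      ultimately show ?thesis using sub by auto
    qed
    obtain \<delta> where dp: "\<delta> > 0" and bO: "ball x0 \<delta> \<subseteq> Ob" using openE[OF oO x0O] by blast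
    show "\<exists>\<delta>>0. \<forall>x'. dist x' x0 < \<delta> \<longrightarrow> dist ((u \<circ> m) x') ((u \<circ> m) x0) < \<epsilon>"
    proof (intro exI[of _ \<delta>] conjI allI impI dp)
      fix x' assume "dist x' x0 < \<delta>"
      then have "x' \<in> Ob" using bO by (auto simp: dist_commute)
      then have "m x' \<in> U" by (rule inU)
      then show "dist ((u \<circ> m) x') ((u \<circ> m) x0) < \<epsilon>"
        unfolding U_def m0_def by (simp add: dist_commute)
    qed
  qed
  have "continuous_on UNIV (u \<circ> m)"
    using cont by (intro continuous_at_imp_continuous_on) auto
  then have "u \<circ> m \<in> utilities" unfolding utilities_def
    using sm by blast
  then show ?thesis using P unfolding m_def by blast
qed

lemma u_le: "u \<in> utilities \<Longrightarrow> x \<le> y \<Longrightarrow> u x \<le> u y"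
proof -
  assume u: "u \<in> utilities" and "x \<le> y"
  then consider "x = y" | "x < y" by (auto simp: order.order_iff_strict)
  then show ?thesis
  proof cases
    case 2 then show ?thesis using u unfolding utilities_def by (simp add: less_imp_le)
  qed simp
qed

lemma freq_transfer:
  assumes g: "strict_mono g" and fr: "\<exists>\<^sub>F k in sequentially. P (g k)"
  shows "\<exists>\<^sub>F n in sequentially. P n"
proof -
  have fl: "filterlim g sequentially sequentially" by (rule filterlim_subseq[OF g])
  show ?thesis
  proof (rule ccontr)
    assume "\<not> (\<exists>\<^sub>F n in sequentially. P n)"
    then have "\<forall>\<^sub>F n in sequentially. \<not> P n" unfolding frequently_def by simp
    then have "\<forall>\<^sub>F k in sequentially. \<not> P (g k)" using fl unfolding filterlim_iff by blast
    then show False using fr unfolding frequently_def by simp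
  qed
qed

lemma cc_limit:
  assumes cc: "closed_conv F G" and g: "strict_mono g"
    and lim: "(y \<longlongrightarrow> p) sequentially"
    and fr: "\<exists>\<^sub>F k in sequentially. y k \<in> F (g k)"
  shows "p \<in> G"
proof -
  have "p \<in> {p. \<forall>V. open V \<and> p \<in> V \<longrightarrow> (\<exists>\<^sub>F n in sequentially. F n \<inter> V \<noteq> {})}"
  proof (intro CollectI allI impI)
    fix V assume V: "open V \<and> p \<in> V"
    then have "\<forall>\<^sub>F k in sequentially. y k \<in> V" using lim topological_tendstoD by blast
    with fr have "\<exists>\<^sub>F k in sequentially. y k \<in> F (g k) \<and> y k \<in> V"
      by (rule frequently_eventually_frequently)
    then have "\<exists>\<^sub>F k in sequentially. F (g k) \<inter> V \<noteq> {}"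
      by (rule frequently_elim1) blast
    then show "\<exists>\<^sub>F n in sequentially. F n \<inter> V \<noteq> {}" by (rule freq_transfer[OF g])
  qed
  then show ?thesis using cc unfolding closed_conv_def by blast
qed

lemma conv:
  fixes M :: "'a::{metric_space,order} set"
  assumes ch: "\<forall>a\<in>M. \<forall>b\<in>M. a \<noteq> b \<longrightarrow> a < b \<or> b < a"
    and conn: "connected M"
    and bnd: "\<forall>x :: nat \<Rightarrow> 'a. bounded (range x) \<longrightarrow>
           (\<exists>ml\<in>M. \<exists>mu\<in>M. \<forall>\<^sub>F n in sequentially. ml \<le> x n \<and> x n \<le> mu)"
    and u: "u \<in> utilities" and K: "compact K" and e: "e > 0"
    and F: "\<forall>n. F n \<in> mono_prefs" and cc: "closed_conv F (Phi u)"
  shows "\<forall>\<^sub>F n in sequentially. \<forall>x\<in>K. \<bar>u (mpt M (F n) x) - u x\<bar> < e"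
proof (rule ccontr)
  define mm where "mm n x = mpt M (F n) x" for n x
  have mp: "\<And>n x. mm n x \<in> M \<and> (x, mm n x) \<in> F n \<and> (mm n x, x) \<in> F n"
    unfolding mm_def using mpt[OF conn bnd] F by blast
  have c: "continuous_on UNIV u" using u unfolding utilities_def by blast
  assume "\<not> (\<forall>\<^sub>F n in sequentially. \<forall>x\<in>K. \<bar>u (mpt M (F n) x) - u x\<bar> < e)"
  then have "\<exists>\<^sub>F n in sequentially. \<exists>x\<in>K. \<bar>u (mm n x) - u x\<bar> \<ge> e"
    unfolding not_eventually mm_def by (auto simp: not_less)
  then have "infinite {n. \<exists>x\<in>K. \<bar>u (mm n x) - u x\<bar> \<ge> e}"
    unfolding frequently_cofinite[symmetric] cofinite_eq_sequentially .
  then obtain r :: "nat \<Rightarrow> nat" where r: "strict_mono r" and rb: "\<forall>k. \<exists>x\<in>K. \<bar>u (mm (r k) x) - u x\<bar> \<ge> e"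
    using infinite_enumerate by blast
  then have "\<forall>k. \<exists>x. x \<in> K \<and> \<bar>u (mm (r k) x) - u x\<bar> \<ge> e" by blast
  from choice[OF this] obtain xs where xs: "\<forall>k::nat. xs k \<in> K \<and> \<bar>u (mm (r k) (xs k)) - u (xs k)\<bar> \<ge> e"
    by blast
  obtain l s where l: "l \<in> K" and s: "strict_mono s" and lim: "(xs \<circ> s) \<longlonglongrightarrow> l"
    using seq_compactE[OF compact_imp_seq_compact[OF K], of xs] xs by blast
  define g where "g = r \<circ> s"
  define y where "y = xs \<circ> s"
  have g: "strict_mono g" unfolding g_def using r s by (rule strict_mono_o)
  have bad: "\<bar>u (mm (g k) (y k)) - u (y k)\<bar> \<ge> e" for k
    using xs unfolding g_def y_def by simp
  have ylim: "y \<longlonglongrightarrow> l" using lim unfolding y_def .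
  have "isCont u l" using c continuous_on_eq_continuous_at[of UNIV u] by simp
  then have "(\<lambda>k. u (y k)) \<longlonglongrightarrow> u l" using ylim by (rule isCont_tendsto_compose)
  then have near: "\<forall>\<^sub>F k in sequentially. \<bar>u (y k) - u l\<bar> < e/2"
    using tendstoD[of _ "u l" sequentially "e/2"] e by (simp add: dist_real_def)
  have "bounded (range (\<lambda>n::nat. l))" by simp
  then obtain ml mu where ml: "ml \<in> M" and mu: "mu \<in> M"
    and ev: "\<forall>\<^sub>F n in sequentially. ml \<le> l \<and> l \<le> mu"
    using bnd by blast
  have le: "ml \<le> l" "l \<le> mu" using ev by simp_all
  have cuM: "connected (u ` M)"
    using connected_continuous_image[OF continuous_on_subset[OF c] conn] by simp
  have "\<forall>\<^sub>F k in sequentially. u (mm (g k) (y k)) \<ge> u (y k) + e \<or> u (mm (g k) (y k)) \<le> u (y k) - e"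
  proof (intro always_eventually allI)
    fix k
    show "u (mm (g k) (y k)) \<ge> u (y k) + e \<or> u (mm (g k) (y k)) \<le> u (y k) - e"
      using bad[of k] by linarith
  qed
  then have "\<exists>\<^sub>F k in sequentially. u (mm (g k) (y k)) \<ge> u (y k) + e \<or> u (mm (g k) (y k)) \<le> u (y k) - e"
    by (intro eventually_frequently) simp_all
  then consider (up) "\<exists>\<^sub>F k in sequentially. u (mm (g k) (y k)) \<ge> u (y k) + e"
    | (dn) "\<exists>\<^sub>F k in sequentially. u (mm (g k) (y k)) \<le> u (y k) - e"
    unfolding frequently_disj_iff by blast
  then show False
  proof cases
    case up
    have fr: "\<exists>\<^sub>F k in sequentially. u (mm (g k) (y k)) \<ge> u (y k) + e \<and> \<bar>u (y k) - u l\<bar> < e/2"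
      using frequently_eventually_frequently[OF up near] .
    then obtain k0 where k0: "u (mm (g k0) (y k0)) \<ge> u (y k0) + e" "\<bar>u (y k0) - u l\<bar> < e/2"
      using frequently_ex by blast
    define cv where "cv = u l + e/4"
    have "u ml \<le> cv" using u_le[OF u le(1)] e unfolding cv_def by simp
    moreover have "cv \<le> u (mm (g k0) (y k0))" using k0 e unfolding cv_def abs_less_iff by linarith
    ultimately have "cv \<in> u ` M"
      using connectedD_interval[OF cuM imageI imageI, of ml "mm (g k0) (y k0)" cv] ml mp[of "g k0" "y k0"] by blast
    then obtain m' where m': "m' \<in> M" "u m' = cv" by blast
    have "\<exists>\<^sub>F k in sequentially. (y k, m') \<in> F (g k)"
    proof (rule frequently_elim1[OF fr])
      fix k assume h: "u (mm (g k) (y k)) \<ge> u (y k) + e \<and> \<bar>u (y k) - u l\<bar> < e/2"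
      let ?mk = "mm (g k) (y k)"
      have mkM: "?mk \<in> M" using mp by blast
      have "u m' \<le> u ?mk" using h m'(2) e unfolding cv_def abs_less_iff by linarith
      then have "m' \<le> ?mk" using util_chain[OF ch u m'(1) mkM] by blast
      then have "(?mk, m') \<in> F (g k)" using chain_R[OF ch F[rule_format] mkM m'(1)] by blast
      then show "(y k, m') \<in> F (g k)" using mp[of "g k" "y k"] mp_trans[OF F[rule_format]] by blast
    qed
    then have "(l, m') \<in> Phi u"
      by (intro cc_limit[OF cc g, of "\<lambda>k. (y k, m')"] tendsto_Pair ylim tendsto_const)
    then have "u m' \<le> u l" unfolding Phi_def by simp
    then show False using m'(2) e unfolding cv_def by simp
  next
    case dn
    have fr: "\<exists>\<^sub>F k in sequentially. u (mm (g k) (y k)) \<le> u (y k) - e \<and> \<bar>u (y k) - u l\<bar> < e/2"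
      using frequently_eventually_frequently[OF dn near] .
    then obtain k0 where k0: "u (mm (g k0) (y k0)) \<le> u (y k0) - e" "\<bar>u (y k0) - u l\<bar> < e/2"
      using frequently_ex by blast
    define cv where "cv = u l - e/4"
    have "cv \<le> u mu" using u_le[OF u le(2)] e unfolding cv_def by simp
    moreover have "u (mm (g k0) (y k0)) \<le> cv" using k0 e unfolding cv_def abs_less_iff by linarith
    ultimately have "cv \<in> u ` M"
      using connectedD_interval[OF cuM imageI imageI, of "mm (g k0) (y k0)" mu cv] mu mp[of "g k0" "y k0"] by blast
    then obtain m' where m': "m' \<in> M" "u m' = cv" by blast
    have "\<exists>\<^sub>F k in sequentially. (m', y k) \<in> F (g k)"
    proof (rule frequently_elim1[OF fr])
      fix k assume h: "u (mm (g k) (y k)) \<le> u (y k) - e \<and> \<bar>u (y k) - u l\<bar> < e/2"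
      let ?mk = "mm (g k) (y k)"
      have mkM: "?mk \<in> M" using mp by blast
      have "u ?mk \<le> u m'" using h m'(2) e unfolding cv_def abs_less_iff by linarith
      then have "?mk \<le> m'" using util_chain[OF ch u mkM m'(1)] by blast
      then have "(m', ?mk) \<in> F (g k)" using chain_R[OF ch F[rule_format] m'(1) mkM] by blast
      then show "(m', y k) \<in> F (g k)" using mp[of "g k" "y k"] mp_trans[OF F[rule_format]] by blast
    qed
    then have "(m', l) \<in> Phi u"
      by (intro cc_limit[OF cc g, of "\<lambda>k. (m', y k)"] tendsto_Pair ylim tendsto_const)
    then have "u l \<le> u m'" unfolding Phi_def by simp
    then show False using m'(2) e unfolding cv_def by simp
  qed
qed

theorem theorem8:
  fixes M :: "'a::{metric_space,order} set"
  assumes "connected (UNIV :: 'a set)"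
    and "locally_compact_space (euclidean :: 'a topology)"
    and "Polish_space (euclidean :: 'a topology)"
    and "\<exists>a b. a \<in> M \<and> b \<in> M \<and> a \<noteq> b"
    and "connected M"
    and "\<forall>a\<in>M. \<forall>b\<in>M. a \<noteq> b \<longrightarrow> a < b \<or> b < a"
    and "\<forall>m\<in>M. \<forall>U. open U \<and> m \<in> U \<longrightarrow>
           (\<exists>ml\<in>M. \<exists>mu\<in>M. m \<in> {ml..mu} \<and> {ml..mu} \<subseteq> U \<and>
              (\<not> (\<forall>z\<in>M. z \<le> m) \<longrightarrow> m < mu) \<and>
              (\<not> (\<forall>z\<in>M. m \<le> z) \<longrightarrow> ml < m))"
    and "\<forall>x :: nat \<Rightarrow> 'a. bounded (range x) \<longrightarrow>
           (\<exists>ml\<in>M. \<exists>mu\<in>M. \<forall>\<^sub>F n in sequentially. ml \<le> x n \<and> x n \<le> mu)"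
  shows "\<forall>S. open_ucc S \<longrightarrow> open_cc (Phi ` (S :: ('a \<Rightarrow> real) set))"
proof (intro allI impI)
  note conn = assms(5) and ch = assms(6) and loc = assms(7) and bnd = assms(8)
  fix S :: "('a \<Rightarrow> real) set"
  assume oS: "open_ucc S"
  have Su: "S \<subseteq> utilities" using oS unfolding open_ucc_def by blast
  have sub: "Phi ` S \<subseteq> mono_prefs" using Su Phi_mono by blast
  have "\<forall>\<^sub>F n in sequentially. F n \<in> Phi ` S"
    if R: "R \<in> Phi ` S" and F: "\<forall>n. F n \<in> mono_prefs" and cc: "closed_conv F R" for R F
  proof -
    obtain u where uS: "u \<in> S" and Ru: "R = Phi u" using R by blast
    have u: "u \<in> utilities" using uS Su by blast
    obtain K e where K: "compact K" and e: "e > 0"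
      and ball: "\<forall>v\<in>utilities. (\<forall>x\<in>K. \<bar>v x - u x\<bar> < e) \<longrightarrow> v \<in> S"
      using oS uS unfolding open_ucc_def by blast
    have "\<forall>\<^sub>F n in sequentially. \<forall>x\<in>K. \<bar>u (mpt M (F n) x) - u x\<bar> < e"
      using conv[OF ch conn bnd u K e F] cc Ru by blast
    then show ?thesis
    proof (rule eventually_mono)
      fix n assume h: "\<forall>x\<in>K. \<bar>u (mpt M (F n) x) - u x\<bar> < e"
      have rp: "Phi (u \<circ> mpt M (F n)) = F n \<and> u \<circ> mpt M (F n) \<in> utilities"
        using rep[OF ch conn loc bnd u F[rule_format]] .
      then have "u \<circ> mpt M (F n) \<in> S" using ball h by simp
      then show "F n \<in> Phi ` S" using rp by (metis image_eqI)
    qed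
  qed
  then show "open_cc (Phi ` S)" unfolding open_cc_def using sub by blast
qed

end
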